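(* For all integers $\ell\ge 5$ and $b\ge 5$ there exists a planar graph $G$ that contains no subgraph isomorphic to $K_4$ or to $B_b$, contains no subgraph isomorphic to $C_k$ for any $5\le k\le \ell$, and is not properly $3$-colorable.
   Context: $K_n$ is the complete graph and $C_n$ the cycle on $n$ vertices. For $n\ge 3$, the book $B_n$ is the graph on $n$ vertices consisting of $n-2$ triangles sharing one common edge. *)

theory Defs
  imports "HOL-Analysis.Analysis"
begin

definition simple_graph :: "'a set \<Rightarrow> 'a set set \<Rightarrow> bool" where
  "simple_graph V E \<longleftrightarrow> finite V \<and>
     (\<forall>e\<in>E. \<exists>u v. u \<noteq> v \<and> u \<in> V \<and> v \<in> V \<and> e = {u, v})"

definition contains_copy :: "'b set \<Rightarrow> 'b set set \<Rightarrow> 'a set \<Rightarrow> 'a set set \<Rightarrow> bool" where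
  "contains_copy VH EH VG EG \<longleftrightarrow>
     (\<exists>f. inj_on f VH \<and> f ` VH \<subseteq> VG \<and> (\<forall>e\<in>EH. f ` e \<in> EG))"

definition K_verts :: "nat \<Rightarrow> nat set" where "K_verts n = {0..<n}"
definition K_edges :: "nat \<Rightarrow> nat set set" where
  "K_edges n = {{i, j} | i j. i < n \<and> j < n \<and> i \<noteq> j}"

definition C_verts :: "nat \<Rightarrow> nat set" where "C_verts n = {0..<n}"
definition C_edges :: "nat \<Rightarrow> nat set set" where
  "C_edges n = {{i, (i + 1) mod n} | i. i < n}"

text \<open>B_n: n-2 triangles sharing the common edge {0,1}.\<close>
definition B_verts :: "nat \<Rightarrow> nat set" where "B_verts n = {0..<n}"
definition B_edges :: "nat \<Rightarrow> nat set set" where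
  "B_edges n = {{0, 1}} \<union> {{0, i} | i. 2 \<le> i \<and> i < n} \<union> {{1, i} | i. 2 \<le> i \<and> i < n}"

definition three_colorable :: "'a set \<Rightarrow> 'a set set \<Rightarrow> bool" where
  "three_colorable V E \<longleftrightarrow>
     (\<exists>c :: 'a \<Rightarrow> nat. (\<forall>v\<in>V. c v < 3) \<and> (\<forall>u v. {u, v} \<in> E \<longrightarrow> c u \<noteq> c v))"

definition planar :: "'a set \<Rightarrow> 'a set set \<Rightarrow> bool" where
  "planar V E \<longleftrightarrow>
     (\<exists>(p :: 'a \<Rightarrow> real \<times> real) (\<gamma> :: 'a set \<Rightarrow> real \<Rightarrow> real \<times> real).
        inj_on p V \<and>
        (\<forall>e\<in>E. \<exists>u v. e = {u, v} \<and> arc (\<gamma> e) \<and> pathstart (\<gamma> e) = p u \<and> pathfinish (\<gamma> e) = p v) \<and>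
        (\<forall>e\<in>E. \<forall>w\<in>V. p w \<in> path_image (\<gamma> e) \<longrightarrow> w \<in> e) \<and>
        (\<forall>e\<in>E. \<forall>e'\<in>E. e \<noteq> e' \<longrightarrow> path_image (\<gamma> e) \<inter> path_image (\<gamma> e') \<subseteq> p ` (e \<inter> e')))"

end

theory Submission
  imports Defs
begin


definition pos :: "nat \<Rightarrow> nat" where
  "pos v = 2 * (v div 3) + (if v mod 3 = 0 then 0 else 1)"

definition fib :: "nat \<Rightarrow> nat set" where
  "fib p = {3*(p div 2) + (p mod 2), 3*(p div 2) + 2*(p mod 2)}"

lemma v_dec: obtains q r where "v = 3*q + r" "r < 3" "pos v = 2*q + (if r = 0 then 0 else 1)"
proof -
  have "v = 3*(v div 3) + v mod 3" by simp
  then show ?thesis using that[of "v div 3" "v mod 3"] unfolding pos_def by simp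
qed

lemma pos_fib: "v \<in> fib (pos v)"
proof -
  obtain q r where "v = 3*q + r" "r < 3" "pos v = 2*q + (if r = 0 then 0 else 1)" by (rule v_dec)
  moreover have "r = 0 \<or> r = 1 \<or> r = 2" using \<open>r < 3\<close> by auto
  ultimately show ?thesis unfolding fib_def by auto
qed

lemma fib_even: "even p \<Longrightarrow> card (fib p) = 1"
  unfolding fib_def by (auto elim!: evenE)

lemma fib_card: "card (fib p) \<le> 2"
  unfolding fib_def by (simp add: card_insert_le_m1)

lemma fib2_card: "card (fib p \<union> fib (Suc p)) \<le> 3"
proof -
  have "card (fib p \<union> fib (Suc p)) \<le> card (fib p) + card (fib (Suc p))" by (rule card_Un_le)
  moreover have "card (fib p) = 1 \<or> card (fib (Suc p)) = 1" using fib_even[of p] fib_even[of "Suc p"] by (cases "even p") auto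
  ultimately show ?thesis using fib_card[of p] fib_card[of "Suc p"] by linarith
qed

definition small :: "nat \<Rightarrow> nat \<Rightarrow> bool" where
  "small u v \<longleftrightarrow> pos u \<le> pos v + 1 \<and> pos v \<le> pos u + 1"

definition adj :: "nat \<Rightarrow> nat \<Rightarrow> nat \<Rightarrow> bool" where
  "adj m u v \<longleftrightarrow> u \<le> 3*m \<and> v \<le> 3*m \<and> u \<noteq> v \<and> (small u v \<or> {u,v} = {0, 3*m})"

definition GE :: "nat \<Rightarrow> nat set set" where
  "GE m = {{u,v} | u v. adj m u v}"

lemma adj_sym: "adj m u v \<Longrightarrow> adj m v u"
  unfolding adj_def small_def by (auto simp: insert_commute)

lemma GE_iff: "{u,v} \<in> GE m \<longleftrightarrow> adj m u v"
  unfolding GE_def by (auto simp: doubleton_eq_iff intro: adj_sym)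

lemma pos0[simp]: "pos 0 = 0" by (simp add: pos_def)
lemma pos3[simp]: "pos (3*m) = 2*m" by (simp add: pos_def)

lemma common_closing:
  assumes "m \<ge> 2" "adj m u x" "adj m u y" "{x,y} = {0,3*m}" shows False
proof -
  have A: "adj m u 0" "adj m u (3*m)" using assms(2-4) by (auto simp: doubleton_eq_iff)
  have "u \<noteq> 3*m" using A(2) unfolding adj_def by simp
  have "small u 0" using A(1) \<open>u \<noteq> 3*m\<close> unfolding adj_def by (auto simp: doubleton_eq_iff)
  moreover have "u \<noteq> 0" using A(1) unfolding adj_def by simp
  moreover have "small u (3*m)" using A(2) \<open>u \<noteq> 0\<close> unfolding adj_def by (auto simp: doubleton_eq_iff)
  ultimately show False using assms(1) unfolding small_def by simp
qed

lemma small_set_card: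
  assumes "finite S" "\<And>x y. x \<in> S \<Longrightarrow> y \<in> S \<Longrightarrow> small x y" shows "card S \<le> 3"
proof (cases "S = {}")
  case True then show ?thesis by simp
next
  case False
  define q where "q = Min (pos ` S)"
  obtain z where z: "z \<in> S" "pos z = q" unfolding q_def using False assms(1)
    by (metis (mono_tags, lifting) Min_in finite_imageI image_iff image_is_empty)
  have "S \<subseteq> fib q \<union> fib (Suc q)"
  proof
    fix x assume x: "x \<in> S"
    have "q \<le> pos x" unfolding q_def using x assms(1) by simp
    moreover have "pos x \<le> q + 1" using assms(2)[OF x z(1)] z(2) unfolding small_def by simp
    ultimately have "pos x = q \<or> pos x = Suc q" by linarith
    then show "x \<in> fib q \<union> fib (Suc q)" using pos_fib[of x] by auto
  qed
  then have "card S \<le> card (fib q \<union> fib (Suc q))" by (intro card_mono) (auto simp: fib_def)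
  then show ?thesis using fib2_card[of q] by linarith
qed

lemma five_small:
  assumes "small a b" "small a c" "small a d" "small a e" "small b c" "small b d" "small b e"
    "distinct [a,b,c,d,e]"
  shows False
proof (cases "pos a = pos b")
  case True
  define q where "q = pos a"
  have fa: "a \<in> fib q" "b \<in> fib q" using pos_fib[of a] pos_fib[of b] True q_def by auto
  have "odd q"
  proof
    assume "even q"
    then have "card (fib q) = 1" by (rule fib_even)
    then show False using fa assms(8) by (auto simp: card_Suc_eq)
  qed
  have "fib q = {a,b}" using fa assms(8) unfolding fib_def by auto
  have "{c,d,e} \<subseteq> fib (q - 1) \<union> fib (Suc q)"
  proof
    fix x assume x: "x \<in> {c,d,e}"
    have "small a x" using x assms by auto
    then have "pos x = q - 1 \<or> pos x = q \<or> pos x = Suc q" unfolding small_def q_def by linarith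
    moreover have "pos x \<noteq> q"
    proof
      assume "pos x = q"
      then have "x \<in> {a,b}" using pos_fib[of x] \<open>fib q = {a,b}\<close> by simp
      then show False using x assms(8) by auto
    qed
    ultimately show "x \<in> fib (q - 1) \<union> fib (Suc q)" using pos_fib[of x] by auto
  qed
  then have "card {c,d,e} \<le> card (fib (q - 1) \<union> fib (Suc q))" by (intro card_mono) (auto simp: fib_def)
  also have "\<dots> \<le> card (fib (q - 1)) + card (fib (Suc q))" by (rule card_Un_le)
  also have "\<dots> = 2"
  proof -
    have "even (q - 1)" "even (Suc q)" using \<open>odd q\<close> by presburger+
    then show ?thesis using fib_even[of "q - 1"] fib_even[of "Suc q"] by simp
  qed
  finally show False using assms(8) by simp
next
  case False
  define q where "q = min (pos a) (pos b)"
  have "{a,b,c,d,e} \<subseteq> fib q \<union> fib (Suc q)"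
  proof
    fix x assume x: "x \<in> {a,b,c,d,e}"
    have ab: "pos a = Suc (pos b) \<or> pos b = Suc (pos a)" using assms(1) False unfolding small_def by linarith
    have "x = a \<or> x = b \<or> x = c \<or> x = d \<or> x = e" using x by auto
    have qq: "q = pos a \<and> pos b = Suc q \<or> q = pos b \<and> pos a = Suc q" using ab unfolding q_def by auto
    have s: "small a x" "small b x" using x assms(1-7) by (auto simp: small_def)
    have "pos x = q \<or> pos x = Suc q"
      using qq s unfolding small_def by (elim disjE conjE; linarith)
    then show "x \<in> fib q \<union> fib (Suc q)" using pos_fib[of x] by auto
  qed
  then have "card {a,b,c,d,e} \<le> card (fib q \<union> fib (Suc q))" by (intro card_mono) (auto simp: fib_def)
  then show False using fib2_card[of q] assms(8) by simp
qed




definition stepok :: "(nat \<Rightarrow> nat) \<Rightarrow> nat \<Rightarrow> bool" where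
  "stepok g j \<longleftrightarrow> g (Suc j) \<le> g j + 1 \<and> g j \<le> g (Suc j) + 1"

lemma ivt_up:
  assumes "\<And>j. a \<le> j \<Longrightarrow> j < b \<Longrightarrow> stepok g j" "a \<le> b" "g a \<le> q" "q \<le> g b"
  shows "\<exists>j. a \<le> j \<and> j \<le> b \<and> g j = q"
  using assms(2,1,4)
proof (induction b rule: dec_induct)
  case base then show ?case using assms(3) by auto
next
  case (step n)
  show ?case
  proof (cases "q \<le> g n")
    case True then show ?thesis using step by force
  next
    case False
    have "stepok g n" using step.prems(1) step.hyps(1,2) by simp
    then have "g (Suc n) = q" using False step.prems(2) unfolding stepok_def by linarith
    then show ?thesis using step.hyps(1) by (intro exI[of _ "Suc n"]) auto
  qed
qed

lemma ivt_down:
  assumes "\<And>j. a \<le> j \<Longrightarrow> j < b \<Longrightarrow> stepok g j" "a \<le> b" "q \<le> g a" "g b \<le> q"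
  shows "\<exists>j. a \<le> j \<and> j \<le> b \<and> g j = q"
  using assms(2,1,4)
proof (induction b rule: dec_induct)
  case base then show ?case using assms(3) by auto
next
  case (step n)
  show ?case
  proof (cases "g n \<le> q")
    case True then show ?thesis using step by force
  next
    case False
    have "stepok g n" using step.prems(1) step.hyps(1,2) by simp
    then have "g (Suc n) = q" using False step.prems(2) unfolding stepok_def by linarith
    then show ?thesis using step.hyps(1) by (intro exI[of _ "Suc n"]) auto
  qed
qed

lemma telescope:
  assumes "\<And>i. i < n \<Longrightarrow> stepok g i"
  shows "g n \<le> g 0 + n \<and> g 0 \<le> g n + n"
  using assms
proof (induction n)
  case 0 then show ?case by simp
next
  case (Suc n)
  then have "g n \<le> g 0 + n \<and> g 0 \<le> g n + n" by simp
  moreover have "stepok g n" using Suc.prems by simp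
  ultimately show ?case unfolding stepok_def by linarith
qed

lemma pos_even_unique: "pos v = q \<Longrightarrow> even q \<Longrightarrow> v = 3 * (q div 2)"
  using pos_fib[of v] unfolding fib_def by (auto elim!: evenE)

lemma fib_range: "2*t \<le> p \<Longrightarrow> p \<le> 2*t+2 \<Longrightarrow> x \<in> fib p \<Longrightarrow> 3*t \<le> x \<and> x \<le> 3*t+3"
proof -
  assume "2*t \<le> p" "p \<le> 2*t+2" "x \<in> fib p"
  then have "p = 2*t \<or> p = 2*t+1 \<or> p = 2*t+2" by linarith
  then show ?thesis using \<open>x \<in> fib p\<close> unfolding fib_def by auto
qed

lemma small_stepok: "small (h j) (h (Suc j)) \<Longrightarrow> stepok (\<lambda>j. pos (h j)) j"
  unfolding small_def stepok_def by simp

lemma no_cycle: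
  assumes m2: "m \<ge> 2" and k5: "5 \<le> k" and km: "k \<le> m" and inj: "inj_on f {0..<k}"
    and ed: "\<And>j. j < k \<Longrightarrow> adj m (f j) (f (Suc j mod k))"
  shows False
proof -
  define h where "h j = f (j mod k)" for j
  have kpos: "k > 0" using k5 by simp
  have hstep: "adj m (h j) (h (Suc j))" for j
  proof -
    have "adj m (f (j mod k)) (f (Suc (j mod k) mod k))" using ed[of "j mod k"] kpos by simp
    then show ?thesis unfolding h_def by (simp add: mod_Suc_eq)
  qed
  have hper: "h (j + k) = h j" for j unfolding h_def by simp
  have hinj: "a = b" if "c \<le> a" "a < c + k" "c \<le> b" "b < c + k" "h a = h b" for a b c
  proof -
    have "a mod k = b mod k" using that(5) inj kpos unfolding h_def inj_on_def by auto
    show ?thesis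
    proof (rule ccontr)
      assume "a \<noteq> b"
      then consider "a < b" | "b < a" by linarith
      then show False
      proof cases
        case 1
        then have "k dvd (b - a)" using \<open>a mod k = b mod k\<close> mod_eq_dvd_iff_nat[of a b k] by simp
        moreover have "0 < b - a" "b - a < k" using 1 that by auto
        ultimately show False using dvd_imp_le by fastforce
      next
        case 2
        then have "k dvd (a - b)" using \<open>a mod k = b mod k\<close> mod_eq_dvd_iff_nat[of b a k] by simp
        moreover have "0 < a - b" "a - b < k" using 2 that by auto
        ultimately show False using dvd_imp_le by fastforce
      qed
    qed
  qed
  show False
  proof (cases "\<exists>j. {h j, h (Suc j)} = {0, 3*m}")
    case True
    then obtain j0 where j0: "{h j0, h (Suc j0)} = {0, 3*m}" by blast
    define g where "g i = pos (h (Suc j0 + i))" for i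
    have st: "stepok g i" if i: "i < k - 1" for i
    proof -
      have "small (h (Suc j0 + i)) (h (Suc (Suc j0 + i))) \<or> {h (Suc j0 + i), h (Suc (Suc j0 + i))} = {0, 3*m}"
        using hstep[of "Suc j0 + i"] unfolding adj_def by auto
      moreover have "{h (Suc j0 + i), h (Suc (Suc j0 + i))} \<noteq> {0, 3*m}"
      proof
        assume eq: "{h (Suc j0 + i), h (Suc (Suc j0 + i))} = {0, 3*m}"
        have hj0: "h j0 = h (j0 + k)" using hper by simp
        have A: "{h (Suc j0 + i), h (Suc (Suc j0 + i))} = {h (j0 + k), h (Suc j0)}"
          using eq j0 hj0 by simp
        have "h (Suc j0 + i) = h (j0 + k) \<or> h (Suc j0 + i) = h (Suc j0)" using A by blast
        moreover have "Suc j0 + i = j0 + k" if "h (Suc j0 + i) = h (j0 + k)"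
          by (rule hinj[where c="Suc j0"]) (use i that in auto)
        moreover have "Suc j0 + i = Suc j0" if "h (Suc j0 + i) = h (Suc j0)"
          by (rule hinj[where c="Suc j0"]) (use i k5 that in auto)
        ultimately have "Suc j0 + i = j0 + k \<or> Suc j0 + i = Suc j0" by metis
        then have i0: "i = 0" using i by auto
        have "h (Suc (Suc j0)) = h (j0 + k) \<or> h (Suc (Suc j0)) = h (Suc j0)" using A i0 by auto
        moreover have "Suc (Suc j0) = j0 + k" if "h (Suc (Suc j0)) = h (j0 + k)"
          by (rule hinj[where c="Suc j0"]) (use k5 that in auto)
        moreover have "Suc (Suc j0) = Suc j0" if "h (Suc (Suc j0)) = h (Suc j0)"
          by (rule hinj[where c="Suc j0"]) (use k5 that in auto)
        ultimately have "Suc (Suc j0) = j0 + k \<or> Suc (Suc j0) = Suc j0" by metis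
        then show False using k5 by auto
      qed
      ultimately show ?thesis unfolding g_def stepok_def small_def by simp
    qed
    have "g (k - 1) \<le> g 0 + (k - 1) \<and> g 0 \<le> g (k - 1) + (k - 1)" by (rule telescope) (use st in auto)
    moreover have "g (k - 1) = pos (h j0)" unfolding g_def using hper[of j0] k5
      by (metis Suc_diff_1 add_Suc_shift kpos add.commute)
    moreover have "g 0 = pos (h (Suc j0))" unfolding g_def by simp
    ultimately have "pos (h j0) \<le> pos (h (Suc j0)) + (k - 1) \<and> pos (h (Suc j0)) \<le> pos (h j0) + (k - 1)" by simp
    moreover have "(h j0 = 0 \<and> h (Suc j0) = 3*m) \<or> (h j0 = 3*m \<and> h (Suc j0) = 0)"
      using j0 by (auto simp: doubleton_eq_iff)
    ultimately show False using km k5 by auto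
  next
    case False
    define g where "g j = pos (h j)" for j
    have stall: "stepok g j" for j
      using hstep[of j] False unfolding adj_def g_def stepok_def small_def by auto
    have gper: "g (j + k) = g j" for j unfolding g_def using hper by simp
    have nocross: False if ab: "a < k" "b < k" "even q" "g a < q" "q < g b" for a b q
    proof -
      have hq: "h j = 3 * (q div 2)" if "g j = q" for j using pos_even_unique that ab(3) unfolding g_def by blast
      consider "a < b" | "b < a" using ab by fastforce
      then show False
      proof cases
        case 1
        obtain j1 where j1: "a \<le> j1" "j1 \<le> b" "g j1 = q"
          using ivt_up[of a b g q] stall 1 ab by auto
        obtain j2 where j2: "b \<le> j2" "j2 \<le> a + k" "g j2 = q"
          using ivt_down[of b "a + k" g q] stall 1 ab gper[of a] by auto
        have "j1 \<noteq> a" "j1 \<noteq> b" "j2 \<noteq> b" "j2 \<noteq> a + k" using j1 j2 ab gper[of a] by auto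
        note ne = this
        have "j1 = j2" by (rule hinj[where c="Suc a"]) (use ne j1 j2 hq[OF j1(3)] hq[OF j2(3)] ab in auto)
        then show False using \<open>j1 \<noteq> b\<close> j1 j2 by auto
      next
        case 2
        obtain j1 where j1: "b \<le> j1" "j1 \<le> a" "g j1 = q"
          using ivt_down[of b a g q] stall 2 ab by auto
        obtain j2 where j2: "a \<le> j2" "j2 \<le> b + k" "g j2 = q"
          using ivt_up[of a "b + k" g q] stall 2 ab gper[of b] by auto
        have "j1 \<noteq> a" "j1 \<noteq> b" "j2 \<noteq> a" "j2 \<noteq> b + k" using j1 j2 ab gper[of b] by auto
        note ne = this
        have "j1 = j2" by (rule hinj[where c="Suc b"]) (use ne j1 j2 hq[OF j1(3)] hq[OF j2(3)] ab in auto)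
        then show False using \<open>j1 \<noteq> a\<close> j1 j2 by auto
      qed
    qed
    define \<mu> where "\<mu> = Min (g ` {0..<k})"
    obtain a0 where a0: "a0 < k" "g a0 = \<mu>"
    proof -
      have "\<mu> \<in> g ` {0..<k}" unfolding \<mu>_def using kpos by (intro Min_in) auto
      then show ?thesis using that by auto
    qed
    define t where "t = \<mu> div 2"
    have rng: "3*t \<le> f b \<and> f b \<le> 3*t+3" if b: "b < k" for b
    proof -
      have "\<mu> \<le> g b" unfolding \<mu>_def using b by simp
      moreover have "g b \<le> 2*t + 2"
      proof (rule ccontr)
        assume "\<not> g b \<le> 2*t + 2"
        moreover have "\<mu> \<le> 2*t + 1" unfolding t_def by presburger
        ultimately show False using nocross[of a0 b "2*t+2"] a0 b by auto
      qed
      moreover have "2*t \<le> \<mu>" unfolding t_def by simp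
      ultimately have "3*t \<le> h b \<and> h b \<le> 3*t+3" using fib_range[of t "g b" "h b"] pos_fib[of "h b"]
        unfolding g_def by simp
      then show ?thesis unfolding h_def using b by simp
    qed
    have "f ` {0..<k} \<subseteq> {3*t..3*t+3}" using rng by auto
    then have "card (f ` {0..<k}) \<le> card {3*t..3*t+3}" by (intro card_mono) auto
    moreover have "card (f ` {0..<k}) = k" using inj by (simp add: card_image)
    ultimately show False using k5 by simp
  qed
qed




lemma adj_small: "adj m u v \<Longrightarrow> {u,v} \<noteq> {0, 3*m} \<Longrightarrow> small u v"
  unfolding adj_def by auto

lemma pos_3i: "pos (3*i) = 2*i" "pos (3*i+1) = 2*i+1" "pos (3*i+2) = 2*i+1" "pos (3*i+3) = 2*i+2"
proof -
  have "(3*i+2) div 3 = i" "(3*i+2) mod 3 = 2" "(3*i+1) div 3 = i" "(3*i+1) mod 3 = 1" by presburger+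
  then show "pos (3*i) = 2*i" "pos (3*i+1) = 2*i+1" "pos (3*i+2) = 2*i+1" "pos (3*i+3) = 2*i+2"
    unfolding pos_def by simp_all
qed

lemma not_3col: assumes "m \<ge> 2" shows "\<not> three_colorable {0..3*m} (GE m)"
proof
  assume "three_colorable {0..3*m} (GE m)"
  then obtain c :: "nat \<Rightarrow> nat" where c: "\<forall>v\<in>{0..3*m}. c v < 3" "\<forall>u v. {u,v} \<in> GE m \<longrightarrow> c u \<noteq> c v"
    unfolding three_colorable_def by blast
  have cadj: "c u \<noteq> c v" if "adj m u v" for u v using c(2) that GE_iff by blast
  have "i \<le> m \<Longrightarrow> c (3*i) = c 0" for i
  proof (induction i)
    case 0 then show ?case by simp
  next
    case (Suc i)
    then have i: "i < m" by simp
    have sm: "small (3*i) (3*i+1)" "small (3*i) (3*i+2)" "small (3*i+1) (3*i+2)"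
      "small (3*i+1) (3*i+3)" "small (3*i+2) (3*i+3)"
      unfolding small_def pos_3i by simp_all
    have a: "adj m (3*i) (3*i+1)" "adj m (3*i) (3*i+2)" "adj m (3*i+1) (3*i+2)"
      "adj m (3*i+1) (3*i+3)" "adj m (3*i+2) (3*i+3)"
      using sm i unfolding adj_def by auto
    have lt: "c (3*i) < 3" "c (3*i+1) < 3" "c (3*i+2) < 3" "c (3*i+3) < 3" using c(1) i by auto
    have "c (3*i+3) = c (3*i)" using cadj[OF a(1)] cadj[OF a(2)] cadj[OF a(3)] cadj[OF a(4)] cadj[OF a(5)] lt
      by linarith
    then show ?case using Suc by (simp add: add.commute)
  qed
  then have "c (3*m) = c 0" by simp
  moreover have "adj m 0 (3*m)" using assms unfolding adj_def by auto
  ultimately show False using cadj[of 0 "3*m"] by simp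
qed

lemma no_K4: assumes "m \<ge> 2" shows "\<not> contains_copy (K_verts 4) (K_edges 4) {0..3*m} (GE m)"
proof
  assume "contains_copy (K_verts 4) (K_edges 4) {0..3*m} (GE m)"
  then obtain f where f: "inj_on f {0..<4}" "\<forall>e\<in>K_edges 4. f ` e \<in> GE m"
    unfolding contains_copy_def K_verts_def by blast
  have a: "adj m (f i) (f j)" if "i < 4" "j < 4" "i \<noteq> j" for i j
  proof -
    have "{i,j} \<in> K_edges 4" unfolding K_edges_def using that by blast
    then have "f ` {i,j} \<in> GE m" using f(2) by blast
    then show ?thesis using GE_iff by simp
  qed
  show False
  proof (cases "\<exists>i j. i < 4 \<and> j < 4 \<and> i \<noteq> j \<and> {f i, f j} = {0, 3*m}")
    case True
    then obtain i j where ij: "i < 4" "j < 4" "i \<noteq> j" "{f i, f j} = {0, 3*m}" by blast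
    have "\<exists>k<4. k \<noteq> i \<and> k \<noteq> j" using ij(1-3) by presburger
    then obtain k where k: "k < 4" "k \<noteq> i" "k \<noteq> j" by blast
    show False using common_closing[OF assms a[of k i] a[of k j] ij(4)] ij k by auto
  next
    case False
    have "card (f ` {0..<4}) \<le> 3"
    proof (rule small_set_card)
      fix x y assume "x \<in> f ` {0..<4}" "y \<in> f ` {0..<4}"
      then obtain i j where ij: "i < 4" "j < 4" "x = f i" "y = f j" by auto
      show "small x y"
      proof (cases "i = j")
        case True then show ?thesis using ij by (simp add: small_def)
      next
        case ne: False
        then have "{f i, f j} \<noteq> {0,3*m}" using False ij by blast
        then show ?thesis using adj_small[OF a[OF ij(1,2) ne]] ij by simp
      qed
    qed simp
    moreover have "card (f ` {0..<4}) = 4" using f(1) by (simp add: card_image)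
    ultimately show False by simp
  qed
qed

lemma no_B: assumes "m \<ge> 2" "b \<ge> 5" shows "\<not> contains_copy (B_verts b) (B_edges b) {0..3*m} (GE m)"
proof
  assume "contains_copy (B_verts b) (B_edges b) {0..3*m} (GE m)"
  then obtain f where f: "inj_on f {0..<b}" "\<forall>e\<in>B_edges b. f ` e \<in> GE m"
    unfolding contains_copy_def B_verts_def by blast
  have a01: "adj m (f 0) (f 1)"
  proof -
    have "{0,1} \<in> B_edges b" unfolding B_edges_def by blast
    then show ?thesis using f(2) GE_iff by force
  qed
  have ai: "adj m (f 0) (f i) \<and> adj m (f 1) (f i)" if "2 \<le> i" "i < b" for i
  proof -
    have "{0,i} \<in> B_edges b" "{1,i} \<in> B_edges b" unfolding B_edges_def using that by blast+
    then show ?thesis using f(2) GE_iff by force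
  qed
  have A: "adj m (f 0) (f 2)" "adj m (f 1) (f 2)" "adj m (f 0) (f 3)" "adj m (f 1) (f 3)"
    "adj m (f 0) (f 4)" "adj m (f 1) (f 4)" using ai[of 2] ai[of 3] ai[of 4] assms(2) by auto
  have c01: "{f 0, f 1} \<noteq> {0, 3*m}" using common_closing[OF assms(1) adj_sym[OF A(1)] adj_sym[OF A(2)]] by blast
  have c0: "{f 0, f i} \<noteq> {0, 3*m}" if "2 \<le> i" "i < b" for i
    using common_closing[OF assms(1) adj_sym[OF a01] ai[OF that, THEN conjunct2]] by blast
  have c1: "{f 1, f i} \<noteq> {0, 3*m}" if "2 \<le> i" "i < b" for i
    using common_closing[OF assms(1) a01 ai[OF that, THEN conjunct1]] by blast
  have ne: "\<And>x y. x < b \<Longrightarrow> y < b \<Longrightarrow> x \<noteq> y \<Longrightarrow> f x \<noteq> f y" using f(1) unfolding inj_on_def by auto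
  have d: "distinct [f 0, f 1, f 2, f 3, f 4]"
    using assms(2) by (simp add: ne)
  show False
    apply (rule five_small[OF _ _ _ _ _ _ _ d])
    using adj_small a01 c01 A c0[of 2] c0[of 3] c0[of 4] c1[of 2] c1[of 3] c1[of 4] assms(2) by auto
qed




definition qx :: "nat \<Rightarrow> real" where
  "qx r = (if r = 0 then 0 else if r = 3 then 2 else 1)"
definition qy :: "nat \<Rightarrow> real" where
  "qy r = (if r = 1 then 1 else if r = 2 then -1 else 0)"

definition Pt :: "nat \<Rightarrow> real \<times> real" where
  "Pt v = (2 * real (v div 3) + qx (v mod 3), qy (v mod 3))"

definition segP :: "nat \<Rightarrow> nat \<Rightarrow> real \<Rightarrow> real \<Rightarrow> bool" where
  "segP a b X Y \<longleftrightarrow>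
    (a = 0 \<and> b = 1 \<and> Y = X \<and> 0 \<le> X \<and> X \<le> 1) \<or>
    (a = 0 \<and> b = 2 \<and> Y = -X \<and> 0 \<le> X \<and> X \<le> 1) \<or>
    (a = 1 \<and> b = 2 \<and> X = 1 \<and> -1 \<le> Y \<and> Y \<le> 1) \<or>
    (a = 1 \<and> b = 3 \<and> Y = 2 - X \<and> 1 \<le> X \<and> X \<le> 2) \<or>
    (a = 2 \<and> b = 3 \<and> Y = X - 2 \<and> 1 \<le> X \<and> X \<le> 2)"

definition Dset :: "(nat \<times> nat) set" where
  "Dset = {(0,1),(0,2),(1,2),(1,3),(2,3)}"

lemma in_seg: fixes x1 x2 y1 y2 :: real shows "z \<in> closed_segment (x1,y1) (x2,y2) \<longleftrightarrow>
   (\<exists>u. 0 \<le> u \<and> u \<le> 1 \<and> z = ((1-u)*x1 + u*x2, (1-u)*y1 + u*y2))"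
  by (auto simp: closed_segment_def)

lemma seg_tri:
  assumes "(a,b) \<in> Dset"
  shows "z \<in> closed_segment (c + qx a, qy a) (c + qx b, qy b) \<longleftrightarrow> segP a b (fst z - c) (snd z)"
proof -
  obtain x y where z: "z = (x,y)" by (cases z)
  have "(a,b) = (0,1) \<or> (a,b) = (0,2) \<or> (a,b) = (1,2) \<or> (a,b) = (1,3) \<or> (a,b) = (2,3)"
    using assms unfolding Dset_def by auto
  then show ?thesis
  proof (elim disjE)
    assume "(a,b) = (0,1)"
    then have ab: "a = 0" "b = 1" by auto
    show ?thesis unfolding z ab in_seg segP_def qx_def qy_def
      by (auto simp: algebra_simps intro!: exI[of _ "x - c"])
  next
    assume "(a,b) = (0,2)"
    then have ab: "a = 0" "b = 2" by auto
    show ?thesis unfolding z ab in_seg segP_def qx_def qy_def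
      by (auto simp: algebra_simps intro!: exI[of _ "x - c"])
  next
    assume "(a,b) = (1,2)"
    then have ab: "a = 1" "b = 2" by auto
    show ?thesis unfolding z ab in_seg segP_def qx_def qy_def
      by (auto simp: algebra_simps intro!: exI[of _ "(1 - y)/2"]; simp add: field_simps)
  next
    assume "(a,b) = (1,3)"
    then have ab: "a = 1" "b = 3" by auto
    show ?thesis unfolding z ab in_seg segP_def qx_def qy_def
      by (auto simp: algebra_simps intro!: exI[of _ "x - c - 1"])
  next
    assume "(a,b) = (2,3)"
    then have ab: "a = 2" "b = 3" by auto
    show ?thesis unfolding z ab in_seg segP_def qx_def qy_def
      by (auto simp: algebra_simps intro!: exI[of _ "x - c - 1"])
  qed
qed

lemma segP_D: "segP a b X Y \<Longrightarrow> (a,b) \<in> Dset"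
  unfolding segP_def Dset_def by auto

lemma strip: "segP a b X Y \<Longrightarrow> 0 \<le> X \<and> X \<le> 2 \<and> -1 \<le> Y \<and> Y \<le> 1 \<and>
   (X = 0 \<longrightarrow> Y = 0 \<and> a = 0) \<and> (X = 2 \<longrightarrow> Y = 0 \<and> b = 3) \<and> a \<le> 3 \<and> b \<le> 3"
  unfolding segP_def by auto

lemma L2a: "segP a b X Y \<Longrightarrow> segP a' b' X Y \<Longrightarrow> (a,b) \<noteq> (a',b') \<Longrightarrow>
   (X = qx a \<and> Y = qy a) \<or> (X = qx b \<and> Y = qy b)"
  unfolding segP_def qx_def qy_def by auto

lemma q_inj: "r \<le> 3 \<Longrightarrow> s \<le> 3 \<Longrightarrow> qx r = qx s \<Longrightarrow> qy r = qy s \<Longrightarrow> r = s"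
  unfolding qx_def qy_def by (auto split: if_splits)

lemma L3: "segP a b (qx r) (qy r) \<Longrightarrow> r \<le> 3 \<Longrightarrow> r = a \<or> r = b"
proof -
  assume "segP a b (qx r) (qy r)" "r \<le> 3"
  moreover have "r = 0 \<or> r = 1 \<or> r = 2 \<or> r = 3" using \<open>r \<le> 3\<close> by auto
  ultimately show ?thesis unfolding segP_def qx_def qy_def by auto
qed

lemma Pt_tri: "a \<le> 3 \<Longrightarrow> Pt (3*i + a) = (2 * real i + qx a, qy a)"
proof -
  assume "a \<le> 3"
  then have "a < 3 \<or> a = 3" by auto
  then show ?thesis
  proof
    assume "a < 3"
    then have "(3*i+a) div 3 = i" "(3*i+a) mod 3 = a" by auto
    then show ?thesis unfolding Pt_def by simp
  next
    assume "a = 3"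
    then have "(3*i+a) div 3 = i + 1" "(3*i+a) mod 3 = 0" by auto
    then show ?thesis unfolding Pt_def qx_def qy_def using \<open>a = 3\<close> by simp
  qed
qed

lemma Pt_dec: obtains j r where "w = 3*j + r" "r < 3" "Pt w = (2 * real j + qx r, qy r)"
proof -
  have "w = 3*(w div 3) + w mod 3" by simp
  then show ?thesis using that[of "w div 3" "w mod 3"] unfolding Pt_def by simp
qed

lemma qx_r: "r < 3 \<Longrightarrow> qx r = 0 \<or> qx r = 1" unfolding qx_def by auto
lemma qx0: "r < 3 \<Longrightarrow> qx r = 0 \<Longrightarrow> r = 0" unfolding qx_def by (auto split: if_splits)

lemma Pt_inj: "Pt v = Pt w \<Longrightarrow> v = w"
proof -
  assume eq: "Pt v = Pt w"
  obtain j r where v: "v = 3*j + r" "r < 3" "Pt v = (2 * real j + qx r, qy r)" by (rule Pt_dec)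
  obtain j' r' where w: "w = 3*j' + r'" "r' < 3" "Pt w = (2 * real j' + qx r', qy r')" by (rule Pt_dec)
  have "qy r = qy r'" using eq v w by simp
  then have "r = r'" using v(2) w(2) unfolding qy_def by (auto split: if_splits)
  then have "real j = real j'" using eq v w by simp
  then show ?thesis using v w \<open>r = r'\<close> by simp
qed

lemma vert_on_small:
  assumes "segP a b (fst (Pt w) - 2 * real i) (snd (Pt w))"
  shows "w = 3*i + a \<or> w = 3*i + b"
proof -
  obtain j r where w: "w = 3*j + r" "r < 3" "Pt w = (2 * real j + qx r, qy r)" by (rule Pt_dec)
  have sP: "segP a b (2 * real j + qx r - 2 * real i) (qy r)" using assms w by simp
  note st = strip[OF sP]
  have q01: "qx r = 0 \<or> qx r = 1" using qx_r w(2) by simp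
  have "\<not> j < i"
  proof
    assume "j < i" then have "real j + 1 \<le> real i" by linarith
    then show False using st q01 by linarith
  qed
  moreover have "\<not> i + 1 < j"
  proof
    assume "i + 1 < j" then have "real i + 2 \<le> real j" by linarith
    then show False using st q01 by linarith
  qed
  ultimately have "j = i \<or> j = i + 1" by linarith
  then show ?thesis
  proof
    assume "j = i"
    then have "segP a b (qx r) (qy r)" using sP by simp
    then show ?thesis using L3[of a b r] w \<open>j = i\<close> by auto
  next
    assume ji: "j = i + 1"
    then have X: "2 * real j + qx r - 2 * real i = 2 + qx r" by simp
    then have "qx r = 0" using st q01 by linarith
    then have "r = 0" using qx0 w(2) by simp
    then have "b = 3" using st X \<open>qx r = 0\<close> by simp
    then show ?thesis using w ji \<open>r = 0\<close> by simp
  qed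
qed

lemma small_small:
  assumes s1: "segP a b (x - 2 * real i) y" and s2: "segP a' b' (x - 2 * real i') y"
    and ne: "(i,a,b) \<noteq> (i',a',b')"
  shows "\<exists>w. w \<in> {3*i+a, 3*i+b} \<and> w \<in> {3*i'+a', 3*i'+b'} \<and> (x,y) = Pt w"
proof -
  note st1 = strip[OF s1] and st2 = strip[OF s2]
  consider "i = i'" | "i < i'" | "i' < i" by linarith
  then show ?thesis
  proof cases
    case 1
    then have ne': "(a,b) \<noteq> (a',b')" using ne by auto
    have s2': "segP a' b' (x - 2 * real i) y" using s2 1 by simp
    obtain r where r: "r \<in> {a,b}" "x - 2 * real i = qx r" "y = qy r"
      using L2a[OF s1 s2' ne'] by auto
    obtain r' where r': "r' \<in> {a',b'}" "x - 2 * real i = qx r'" "y = qy r'"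
      using L2a[OF s2' s1] ne' by auto
    have "r = r'" using q_inj[of r r'] r r' st1 st2 by auto
    moreover have "Pt (3*i + r) = (x,y)" using Pt_tri[of r i] r st1 by auto
    ultimately show ?thesis using r r' 1 by (intro exI[of _ "3*i+r"]) auto
  next
    case 2
    then have "real i + 1 \<le> real i'" by linarith
    then have X: "x - 2 * real i = 2" "x - 2 * real i' = 0" using st1 st2 by linarith+
    then have "b = 3" "a' = 0" "y = 0" using st1 st2 by auto
    have "real i' \<le> real i + 1" using X by linarith
    then have "i' = i + 1" using 2 by linarith
    have "Pt (3*i + 3) = (x,y)" using Pt_tri[of 3 i] X \<open>y = 0\<close> unfolding qx_def qy_def by simp
    then show ?thesis using \<open>b = 3\<close> \<open>a' = 0\<close> \<open>i' = i + 1\<close> by (intro exI[of _ "3*i+3"]) auto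
  next
    case 3
    then have "real i' + 1 \<le> real i" by linarith
    then have X: "x - 2 * real i' = 2" "x - 2 * real i = 0" using st1 st2 by linarith+
    then have "b' = 3" "a = 0" "y = 0" using st1 st2 by auto
    have "real i \<le> real i' + 1" using X by linarith
    then have "i = i' + 1" using 3 by linarith
    have "Pt (3*i' + 3) = (x,y)" using Pt_tri[of 3 i'] X \<open>y = 0\<close> unfolding qx_def qy_def by simp
    then show ?thesis using \<open>b' = 3\<close> \<open>a = 0\<close> \<open>i = i' + 1\<close> by (intro exI[of _ "3*i'+3"]) auto
  qed
qed




definition clos :: "nat \<Rightarrow> real \<Rightarrow> real \<times> real" where
  "clos m = linepath (0,0) (0,-2) +++ (linepath (0,-2) (2 * real m,-2) +++ linepath (2 * real m,-2) (2 * real m,0))"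

definition CL :: "nat \<Rightarrow> real \<times> real \<Rightarrow> bool" where
  "CL m z \<longleftrightarrow> (fst z = 0 \<and> -2 \<le> snd z \<and> snd z \<le> 0) \<or> (snd z = -2 \<and> 0 \<le> fst z \<and> fst z \<le> 2 * real m)
     \<or> (fst z = 2 * real m \<and> -2 \<le> snd z \<and> snd z \<le> 0)"

lemma seg_v: "z \<in> closed_segment (c, y1) (c, y2) \<Longrightarrow> y1 \<le> y2 \<Longrightarrow> fst z = c \<and> y1 \<le> snd z \<and> snd z \<le> y2"
  for c y1 y2 :: real
proof -
  assume z: "z \<in> closed_segment (c, y1) (c, y2)" and le: "y1 \<le> y2"
  obtain u where u: "0 \<le> u" "u \<le> 1" "z = ((1-u)*c + u*c, (1-u)*y1 + u*y2)" using z unfolding in_seg by blast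
  have p1: "u*(y2-y1) \<ge> 0" "(1-u)*(y2-y1) \<ge> 0" using u le by simp_all
  have "fst z = c" using u by (simp add: algebra_simps)
  moreover have "snd z = y1 + u*(y2-y1)" "snd z = y2 - (1-u)*(y2-y1)" using u by (simp_all add: algebra_simps)
  ultimately show ?thesis using p1 by linarith
qed

lemma seg_h: "z \<in> closed_segment (x1, c) (x2, c) \<Longrightarrow> x1 \<le> x2 \<Longrightarrow> snd z = c \<and> x1 \<le> fst z \<and> fst z \<le> x2"
  for c x1 x2 :: real
proof -
  assume z: "z \<in> closed_segment (x1, c) (x2, c)" and le: "x1 \<le> x2"
  obtain u where u: "0 \<le> u" "u \<le> 1" "z = ((1-u)*x1 + u*x2, (1-u)*c + u*c)" using z unfolding in_seg by blast
  have p1: "u*(x2-x1) \<ge> 0" "(1-u)*(x2-x1) \<ge> 0" using u le by simp_all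
  have "snd z = c" using u by (simp add: algebra_simps)
  moreover have "fst z = x1 + u*(x2-x1)" "fst z = x2 - (1-u)*(x2-x1)" using u by (simp_all add: algebra_simps)
  ultimately show ?thesis using p1 by linarith
qed

lemma clos_props:
  assumes "m > 0"
  shows "arc (clos m)" "path_image (clos m) \<subseteq> {z. CL m z}"
    "pathstart (clos m) = (0,0)" "pathfinish (clos m) = (2 * real m, 0)"
proof -
  let ?L1 = "linepath (0::real,0::real) (0,-2)"
  let ?L2 = "linepath (0::real,-2::real) (2 * real m,-2)"
  let ?L3 = "linepath (2 * real m,-2::real) (2 * real m,0)"
  have m: "2 * real m > 0" using assms by simp
  have i1: "z \<in> path_image ?L1 \<Longrightarrow> fst z = 0 \<and> -2 \<le> snd z \<and> snd z \<le> 0" for z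
  proof -
    assume "z \<in> path_image ?L1"
    moreover have "closed_segment (0::real,0::real) (0,-2) = closed_segment (0,-2) (0,0)" by (rule closed_segment_commute)
    ultimately show ?thesis using seg_v[of z 0 "-2" 0] by simp
  qed
  have i2: "z \<in> path_image ?L2 \<Longrightarrow> snd z = -2 \<and> 0 \<le> fst z \<and> fst z \<le> 2 * real m" for z
    using seg_h[of z 0 "-2" "2 * real m"] m by simp
  have i3: "z \<in> path_image ?L3 \<Longrightarrow> fst z = 2 * real m \<and> -2 \<le> snd z \<and> snd z \<le> 0" for z
    using seg_v[of z "2 * real m" "-2" 0] by simp
  have a23: "arc (?L2 +++ ?L3)"
  proof (rule arc_join)
    show "arc ?L2" using m by (intro arc_linepath) simp
    show "arc ?L3" by (intro arc_linepath) simp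
    show "pathfinish ?L2 = pathstart ?L3" by simp
    show "path_image ?L2 \<inter> path_image ?L3 \<subseteq> {pathstart ?L3}"
    proof
      fix z assume "z \<in> path_image ?L2 \<inter> path_image ?L3"
      then have "snd z = -2" "fst z = 2 * real m" using i2 i3 by auto
      then show "z \<in> {pathstart ?L3}" by (cases z) simp
    qed
  qed
  have pi23: "path_image (?L2 +++ ?L3) = path_image ?L2 \<union> path_image ?L3" by (rule path_image_join) simp
  show "arc (clos m)" unfolding clos_def
  proof (rule arc_join)
    show "arc ?L1" by (intro arc_linepath) simp
    show "arc (?L2 +++ ?L3)" by (rule a23)
    show "pathfinish ?L1 = pathstart (?L2 +++ ?L3)" by simp
    show "path_image ?L1 \<inter> path_image (?L2 +++ ?L3) \<subseteq> {pathstart (?L2 +++ ?L3)}"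
    proof
      fix z assume "z \<in> path_image ?L1 \<inter> path_image (?L2 +++ ?L3)"
      then have z1: "fst z = 0" and dd: "z \<in> path_image ?L2 \<or> z \<in> path_image ?L3"
        using i1 pi23 by auto
      from dd have "snd z = -2"
      proof
        assume "z \<in> path_image ?L2" then show ?thesis using i2 by blast
      next
        assume "z \<in> path_image ?L3" then have "fst z = 2 * real m" using i3 by blast
        then show ?thesis using z1 m by simp
      qed
      note z2 = this
      show "z \<in> {pathstart (?L2 +++ ?L3)}" using z1 z2 by (cases z) simp
    qed
  qed
  have "path_image (clos m) = path_image ?L1 \<union> path_image (?L2 +++ ?L3)"
    unfolding clos_def by (rule path_image_join) simp
  then show "path_image (clos m) \<subseteq> {z. CL m z}"
  proof -
    assume pe: "path_image (clos m) = path_image ?L1 \<union> path_image (?L2 +++ ?L3)"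
    show ?thesis
    proof
      fix z assume "z \<in> path_image (clos m)"
      then have "z \<in> path_image ?L1 \<or> z \<in> path_image ?L2 \<or> z \<in> path_image ?L3" using pe pi23 by blast
      then show "z \<in> {z. CL m z}"
      proof (elim disjE)
        assume "z \<in> path_image ?L1" then show ?thesis using i1[of z] unfolding CL_def by simp
      next
        assume "z \<in> path_image ?L2" then show ?thesis using i2[of z] unfolding CL_def by simp
      next
        assume "z \<in> path_image ?L3" then show ?thesis using i3[of z] unfolding CL_def by simp
      qed
    qed
  qed
  show "pathstart (clos m) = (0,0)" unfolding clos_def by simp
  show "pathfinish (clos m) = (2 * real m, 0)" unfolding clos_def by simp
qed

lemma closing_small:
  assumes s: "segP a b (x - 2 * real i) y" and c: "CL m (x,y)" and i: "i < m"
  shows "\<exists>w. w \<in> {3*i+a, 3*i+b} \<and> w \<in> {0, 3*m} \<and> (x,y) = Pt w"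
proof -
  note st = strip[OF s]
  have ym: "-1 \<le> y" using st by simp
  have "x = 0 \<or> x = 2 * real m" using c ym unfolding CL_def by auto
  then consider "x = 0" | "x = 2 * real m" by blast
  then show ?thesis
  proof cases
    case 1
    then have "i = 0" using st by simp
    then have "a = 0" "y = 0" using st 1 by auto
    then show ?thesis using 1 \<open>i = 0\<close> Pt_tri[of 0 0] unfolding qx_def qy_def by (intro exI[of _ 0]) auto
  next
    case 2
    then have "real m \<le> real i + 1" using st by linarith
    then have "m = i + 1" using i by linarith
    then have X: "x - 2 * real i = 2" using 2 by simp
    then have "b = 3" "y = 0" using st by auto
    then show ?thesis using 2 X \<open>m = i + 1\<close> Pt_tri[of 3 i] unfolding qx_def qy_def
      by (intro exI[of _ "3*i+3"]) auto
  qed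
qed

lemma vert_on_clos: assumes "CL m (Pt w)" "w \<le> 3*m" shows "w = 0 \<or> w = 3*m"
proof -
  obtain j r where w: "w = 3*j + r" "r < 3" "Pt w = (2 * real j + qx r, qy r)" by (rule Pt_dec)
  have q01: "qx r = 0 \<or> qx r = 1" using qx_r w(2) by simp
  have qy: "qy r \<noteq> -2" unfolding qy_def by auto
  have "CL m (2 * real j + qx r, qy r)" using assms(1) w by simp
  then have "2 * real j + qx r = 0 \<or> 2 * real j + qx r = 2 * real m" using qy unfolding CL_def by auto
  then consider "2 * real j + qx r = 0" | "2 * real j + qx r = 2 * real m" by blast
  then show ?thesis
  proof cases
    case 1
    then have "j = 0" "qx r = 0" using q01 by auto
    then show ?thesis using qx0 w by auto
  next
    case 2
    have "j \<le> m" using w assms(2) by linarith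
    then have "real j \<le> real m" by simp
    have "qx r = 0"
    proof (rule ccontr)
      assume "qx r \<noteq> 0"
      then have "real (2*j+1) = real (2*m)" using 2 q01 by simp
      then have "2*j+1 = 2*m" by (simp only: of_nat_eq_iff)
      then show False by presburger
    qed
    then have "r = 0" "real j = real m" using 2 qx0 w(2) by auto
    then show ?thesis using w by simp
  qed
qed




lemma small_struct:
  assumes "u < v" "v \<le> 3*m" "small u v"
  shows "\<exists>i a b. i < m \<and> (a,b) \<in> Dset \<and> u = 3*i+a \<and> v = 3*i+b"
proof -
  obtain i r where u: "u = 3*i + r" "r < 3" "pos u = 2*i + (if r = 0 then 0 else 1)" by (rule v_dec)
  obtain j s where v: "v = 3*j + s" "s < 3" "pos v = 2*j + (if s = 0 then 0 else 1)" by (rule v_dec)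
  have r3: "r = 0 \<or> r = 1 \<or> r = 2" and s3: "s = 0 \<or> s = 1 \<or> s = 2" using u(2) v(2) by auto
  have "(r = 0 \<and> s = 1 \<and> j = i) \<or> (r = 0 \<and> s = 2 \<and> j = i) \<or> (r = 1 \<and> s = 2 \<and> j = i) \<or>
        (r = 1 \<and> s = 0 \<and> j = i + 1) \<or> (r = 2 \<and> s = 0 \<and> j = i + 1)"
    using r3 s3 u v assms unfolding small_def by (elim disjE) auto
  then show ?thesis
  proof (elim disjE conjE)
    assume "r = 0" "s = 1" "j = i" then show ?thesis using u v assms unfolding Dset_def
      by (intro exI[of _ i] exI[of _ 0] exI[of _ 1]) auto
  next
    assume "r = 0" "s = 2" "j = i" then show ?thesis using u v assms unfolding Dset_def
      by (intro exI[of _ i] exI[of _ 0] exI[of _ 2]) auto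
  next
    assume "r = 1" "s = 2" "j = i" then show ?thesis using u v assms unfolding Dset_def
      by (intro exI[of _ i] exI[of _ 1] exI[of _ 2]) auto
  next
    assume "r = 1" "s = 0" "j = i + 1" then show ?thesis using u v assms unfolding Dset_def
      by (intro exI[of _ i] exI[of _ 1] exI[of _ 3]) auto
  next
    assume "r = 2" "s = 0" "j = i + 1" then show ?thesis using u v assms unfolding Dset_def
      by (intro exI[of _ i] exI[of _ 2] exI[of _ 3]) auto
  qed
qed

lemma edge_class:
  assumes "e \<in> GE m"
  shows "e = {0, 3*m} \<or> (\<exists>i a b. i < m \<and> (a,b) \<in> Dset \<and> e = {3*i+a, 3*i+b})"
proof -
  obtain u v where e: "e = {u,v}" "adj m u v" using assms unfolding GE_def by blast
  show ?thesis
  proof (cases "e = {0, 3*m}")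
    case True then show ?thesis by simp
  next
    case False
    then have sm: "small u v" "u \<noteq> v" "u \<le> 3*m" "v \<le> 3*m" using e unfolding adj_def by auto
    show ?thesis
    proof (cases "u < v")
      case True
      then show ?thesis using small_struct[of u v m] sm e by auto
    next
      case False
      then have "v < u" using sm by simp
      moreover have "small v u" using sm unfolding small_def by simp
      ultimately show ?thesis using small_struct[of v u m] sm e by (auto simp: insert_commute)
    qed
  qed
qed

lemma Dset_lt: "(a,b) \<in> Dset \<Longrightarrow> a < b \<and> b \<le> 3" unfolding Dset_def by auto

lemma tri_ne_clos: "m \<ge> 2 \<Longrightarrow> (a,b) \<in> Dset \<Longrightarrow> {3*i+a, 3*i+b} \<noteq> {0, 3*m}"
  using Dset_lt[of a b] by (auto simp: doubleton_eq_iff)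

lemma small_image:
  assumes "(a,b) \<in> Dset"
  shows "z \<in> closed_segment (Pt (3*i+a)) (Pt (3*i+b)) \<longleftrightarrow> segP a b (fst z - 2 * real i) (snd z)"
  using seg_tri[OF assms, of z "2 * real i"] Pt_tri[of a i] Pt_tri[of b i] Dset_lt[OF assms] by simp

lemma Pt0: "Pt 0 = (0,0)" unfolding Pt_def qx_def qy_def by simp
lemma Pt3m: "Pt (3*m) = (2 * real m, 0)" using Pt_tri[of 0 m] unfolding qx_def qy_def by simp

lemma planar_G: assumes m2: "m \<ge> 2" shows "planar {0..3*m} (GE m)"
proof -
  define \<gamma> where "\<gamma> e = (if e = {0, 3*m} then clos m else linepath (Pt (Min e)) (Pt (Max e)))" for e
  have m0: "m > 0" using m2 by simp
  have cl: "\<gamma> {0, 3*m} = clos m" unfolding \<gamma>_def by simp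
  have tri: "\<gamma> {3*i+a, 3*i+b} = linepath (Pt (3*i+a)) (Pt (3*i+b))
       \<and> (z \<in> path_image (\<gamma> {3*i+a, 3*i+b}) \<longleftrightarrow> segP a b (fst z - 2 * real i) (snd z))"
    if ab: "(a,b) \<in> Dset" for i a b z
  proof -
    have "Min {3*i+a, 3*i+b} = 3*i+a" "Max {3*i+a, 3*i+b} = 3*i+b" using Dset_lt[OF ab] by auto
    then have "\<gamma> {3*i+a, 3*i+b} = linepath (Pt (3*i+a)) (Pt (3*i+b))"
      unfolding \<gamma>_def using tri_ne_clos[OF m2 ab] by simp
    then show ?thesis using small_image[OF ab] by simp
  qed
  have clim: "z \<in> path_image (\<gamma> {0, 3*m}) \<Longrightarrow> CL m z" for z using clos_props(2)[OF m0] cl by auto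
  show ?thesis unfolding planar_def
  proof (intro exI[of _ Pt] exI[of _ \<gamma>] conjI ballI impI)
    show "inj_on Pt {0..3*m}" using Pt_inj by (auto simp: inj_on_def)
  next
    fix e assume e: "e \<in> GE m"
    show "\<exists>u v. e = {u, v} \<and> arc (\<gamma> e) \<and> pathstart (\<gamma> e) = Pt u \<and> pathfinish (\<gamma> e) = Pt v"
      using edge_class[OF e]
    proof (elim disjE exE conjE)
      assume "e = {0, 3*m}"
      then show ?thesis using clos_props[OF m0] cl Pt0 Pt3m by (intro exI[of _ 0] exI[of _ "3*m"]) auto
    next
      fix i a b assume "i < m" "(a,b) \<in> Dset" "e = {3*i+a, 3*i+b}"
      moreover have "Pt (3*i+a) \<noteq> Pt (3*i+b)" using Pt_inj Dset_lt[OF \<open>(a,b) \<in> Dset\<close>]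
        by (metis add_left_cancel less_irrefl)
      ultimately show ?thesis using tri[of a b i] by (intro exI[of _ "3*i+a"] exI[of _ "3*i+b"]) auto
    qed
  next
    fix e w assume e: "e \<in> GE m" and w: "w \<in> {0..3*m}" and pw: "Pt w \<in> path_image (\<gamma> e)"
    show "w \<in> e"
      using edge_class[OF e]
    proof (elim disjE exE conjE)
      assume "e = {0, 3*m}"
      then show ?thesis using vert_on_clos[of m w] clim[of "Pt w"] pw w by auto
    next
      fix i a b assume "i < m" "(a,b) \<in> Dset" "e = {3*i+a, 3*i+b}"
      then show ?thesis using vert_on_small[of a b w i] tri[of a b i "Pt w"] pw by auto
    qed
  next
    fix e e' assume e: "e \<in> GE m" and e': "e' \<in> GE m" and ne: "e \<noteq> e'"
    show "path_image (\<gamma> e) \<inter> path_image (\<gamma> e') \<subseteq> Pt ` (e \<inter> e')"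
    proof
      fix z assume z: "z \<in> path_image (\<gamma> e) \<inter> path_image (\<gamma> e')"
      obtain x y where xy: "z = (x,y)" by (cases z)
      show "z \<in> Pt ` (e \<inter> e')"
        using edge_class[OF e]
      proof (elim disjE exE conjE)
        assume ec: "e = {0, 3*m}"
        show ?thesis using edge_class[OF e']
        proof (elim disjE exE conjE)
          assume "e' = {0, 3*m}" then show ?thesis using ec ne by simp
        next
          fix i a b assume i: "i < m" "(a,b) \<in> Dset" "e' = {3*i+a, 3*i+b}"
          have "CL m (x,y)" using clim z ec xy by auto
          moreover have "segP a b (x - 2 * real i) y" using tri[of a b i z] z i xy by auto
          ultimately obtain w where "w \<in> {3*i+a, 3*i+b}" "w \<in> {0, 3*m}" "(x,y) = Pt w"
            using closing_small i(1) by blast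
          then show ?thesis using ec i xy by auto
        qed
      next
        fix i a b assume i: "i < m" "(a,b) \<in> Dset" "e = {3*i+a, 3*i+b}"
        have s1: "segP a b (x - 2 * real i) y" using tri[of a b i z] z i xy by auto
        show ?thesis using edge_class[OF e']
        proof (elim disjE exE conjE)
          assume ec: "e' = {0, 3*m}"
          have "CL m (x,y)" using clim z ec xy by auto
          then obtain w where "w \<in> {3*i+a, 3*i+b}" "w \<in> {0, 3*m}" "(x,y) = Pt w"
            using closing_small s1 i(1) by blast
          then show ?thesis using ec i xy by auto
        next
          fix i' a' b' assume i': "i' < m" "(a',b') \<in> Dset" "e' = {3*i'+a', 3*i'+b'}"
          have s2: "segP a' b' (x - 2 * real i') y" using tri[of a' b' i' z] z i' xy by auto
          have "(i,a,b) \<noteq> (i',a',b')" using ne i i' by auto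
          then obtain w where "w \<in> {3*i+a, 3*i+b}" "w \<in> {3*i'+a', 3*i'+b'}" "(x,y) = Pt w"
            using small_small[OF s1 s2] by blast
          then show ?thesis using i i' xy by auto
        qed
      qed
    qed
  qed
qed



theorem mainTheorem3:
  fixes l b :: nat
  assumes "l \<ge> 5" and "b \<ge> 5"
  shows "\<exists>(V :: nat set) E. simple_graph V E \<and> planar V E \<and>
           \<not> contains_copy (K_verts 4) (K_edges 4) V E \<and>
           \<not> contains_copy (B_verts b) (B_edges b) V E \<and>
           (\<forall>k. 5 \<le> k \<and> k \<le> l \<longrightarrow> \<not> contains_copy (C_verts k) (C_edges k) V E) \<and>
           \<not> three_colorable V E"
proof (intro exI[of _ "{0..3*l}"] exI[of _ "GE l"] conjI allI impI)
  have m2: "l \<ge> 2" using assms(1) by simp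
  show "simple_graph {0..3*l} (GE l)"
    unfolding simple_graph_def GE_def adj_def by auto
  show "planar {0..3*l} (GE l)" by (rule planar_G[OF m2])
  show "\<not> contains_copy (K_verts 4) (K_edges 4) {0..3*l} (GE l)" by (rule no_K4[OF m2])
  show "\<not> contains_copy (B_verts b) (B_edges b) {0..3*l} (GE l)" by (rule no_B[OF m2 assms(2)])
  show "\<not> three_colorable {0..3*l} (GE l)" by (rule not_3col[OF m2])
  fix k assume k: "5 \<le> k \<and> k \<le> l"
  show "\<not> contains_copy (C_verts k) (C_edges k) {0..3*l} (GE l)"
  proof
    assume "contains_copy (C_verts k) (C_edges k) {0..3*l} (GE l)"
    then obtain f where f: "inj_on f {0..<k}" "\<forall>e\<in>C_edges k. f ` e \<in> GE l"
      unfolding contains_copy_def C_verts_def by blast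
    have "adj l (f j) (f (Suc j mod k))" if "j < k" for j
    proof -
      have "{j, (j + 1) mod k} \<in> C_edges k" unfolding C_edges_def using that by blast
      then have "f ` {j, (j + 1) mod k} \<in> GE l" using f(2) by blast
      then show ?thesis using GE_iff by simp
    qed
    then show False using no_cycle[OF m2 _ _ f(1)] k by blast
  qed
qed

end
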